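(* Let $B=\{[0:0:1],[0:1:0],[1:0:0],[1:1:1]\}\subset\mathbb P^2$, let $Q_B=\{a_1x_2x_3+a_2x_1x_3+a_3x_1x_2 : a_1+a_2+a_3=0\}$ be the $2$-dimensional space of quadrics vanishing on $B$, and let $S_B$ be the (4-dimensional) space of homogeneous sextics $f\in\mathbb C[x_1,x_2,x_3]$ such that the double cover of $\mathbb P^2$ branched along $\{f=0\}$ has singularities equal to or worse than rational double points of type $D_4$ above every point of $B$. Then the map $(Q_B)^3\to\mathbb C[x_1,x_2,x_3]$, $(q_1,q_2,q_3)\mapsto q_1q_2q_3$, induces a surjection $\mathbb P(Q_B)^3\to\mathbb P(S_B)$, and this surjection can be identified with the natural projection $(\mathbb P^1)^3\to(\mathbb P^1)^3/\mathfrak S_3\cong\mathbb P^3$ onto the symmetric product.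
   Context: Having a singularity "equal to or worse than a rational double point of type $D_4$" above a point $p$ means that $f$ vanishes to order at least $3$ at $p$ (equivalently, the Hessian matrix of $f$ vanishes at $p$). $\mathfrak S_3$ acts on $(\mathbb P^1)^3$ by permuting factors. *)

theory Defs
  imports Complex_Main
begin

text \<open>Polynomials in C[x1,x2,x3] are represented by their coefficient functions:
  a polynomial is a map from exponent triples (i,j,k) (monomial x1^i x2^j x3^k)
  to complex coefficients (with finite support in all uses below).\<close>

type_synonym tpoly = "nat \<times> nat \<times> nat \<Rightarrow> complex"

definition mons :: "nat \<Rightarrow> (nat \<times> nat \<times> nat) set" where
  "mons d = {(i, j, k). i + j + k = d}"

definition homog :: "nat \<Rightarrow> tpoly \<Rightarrow> bool" where
  "homog d f \<longleftrightarrow> (\<forall>m. f m \<noteq> 0 \<longrightarrow> m \<in> mons d)"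

definition pmul :: "tpoly \<Rightarrow> tpoly \<Rightarrow> tpoly" where
  "pmul f g = (\<lambda>(i, j, k). \<Sum>(a, b, c)\<in>{..i} \<times> {..j} \<times> {..k}.
                 f (a, b, c) * g (i - a, j - b, k - c))"

definition prod3 :: "tpoly \<Rightarrow> tpoly \<Rightarrow> tpoly \<Rightarrow> tpoly" where
  "prod3 q1 q2 q3 = pmul q1 (pmul q2 q3)"

text \<open>Falling factorial i (i-1) ... (i-a+1), the factor produced by d^a/dx^a on x^i.\<close>
definition ffact :: "nat \<Rightarrow> nat \<Rightarrow> complex" where
  "ffact a i = of_nat (\<Prod>t<a. i - t)"

definition pderiv_eval :: "nat \<Rightarrow> tpoly \<Rightarrow> nat \<times> nat \<times> nat \<Rightarrow> complex \<times> complex \<times> complex \<Rightarrow> complex" where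
  "pderiv_eval d f = (\<lambda>(a, b, c) (x, y, z).
     \<Sum>(i, j, k)\<in>mons d. f (i, j, k) * ffact a i * ffact b j * ffact c k
        * x ^ (i - a) * y ^ (j - b) * z ^ (k - c))"

definition vanishes_to_order :: "nat \<Rightarrow> tpoly \<Rightarrow> nat \<Rightarrow> complex \<times> complex \<times> complex \<Rightarrow> bool" where
  "vanishes_to_order d f r p \<longleftrightarrow>
     (\<forall>a b c. a + b + c < r \<longrightarrow> pderiv_eval d f (a, b, c) p = 0)"

definition Bpts :: "(complex \<times> complex \<times> complex) set" where
  "Bpts = {(0, 0, 1), (0, 1, 0), (1, 0, 0), (1, 1, 1)}"

definition quad :: "complex \<Rightarrow> complex \<Rightarrow> complex \<Rightarrow> tpoly" where
  "quad a1 a2 a3 = (\<lambda>m. if m = (0, 1, 1) then a1 else if m = (1, 0, 1) then a2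
                         else if m = (1, 1, 0) then a3 else 0)"

definition QB :: "tpoly set" where
  "QB = {quad a1 a2 a3 | a1 a2 a3. a1 + a2 + a3 = 0}"

text \<open>Sextics whose double cover has singularities at least D4 above each point of B,
  i.e. which vanish to order at least 3 at each point of B.\<close>
definition SB :: "tpoly set" where
  "SB = {f. homog 6 f \<and> (\<forall>p\<in>Bpts. vanishes_to_order 6 f 3 p)}"

definition zpoly :: tpoly where
  "zpoly = (\<lambda>_. 0)"

text \<open>f and g define the same point of a projective space.\<close>
definition proportional :: "tpoly \<Rightarrow> tpoly \<Rightarrow> bool" where
  "proportional f g \<longleftrightarrow> (\<exists>c. c \<noteq> 0 \<and> g = (\<lambda>m. c * f m))"

end

theory Submission
  imports Defs "HOL-Computational_Algebra.Fundamental_Theorem_Algebra"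
begin


definition mon1 :: "nat \<times> nat \<times> nat \<Rightarrow> complex \<Rightarrow> tpoly" where
  "mon1 e x = (\<lambda>m. if m = e then x else 0)"

lemma pmul_add_left:
  "pmul (\<lambda>m. f m + h m) g = (\<lambda>m. pmul f g m + pmul h g m)"
  unfolding pmul_def by (rule ext) (simp add: sum.distrib[symmetric] split_def distrib_right)

lemma sum_single_pt:
  assumes "finite S" "m0 \<in> S" "\<And>m. m \<in> S \<Longrightarrow> m \<noteq> m0 \<Longrightarrow> h m = 0"
  shows "sum h S = h m0"
proof -
  have "sum h S = sum h {m0}"
    by (rule sum.mono_neutral_right) (use assms in auto)
  then show ?thesis by simp
qed

lemma pmul_mono:
  "pmul (mon1 (a0, b0, c0) x) g (i, j, k) =
     (if a0 \<le> i \<and> b0 \<le> j \<and> c0 \<le> k then x * g (i - a0, j - b0, k - c0) else 0)"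
proof (cases "a0 \<le> i \<and> b0 \<le> j \<and> c0 \<le> k")
  case True
  show ?thesis unfolding pmul_def split_conv
    by (subst sum_single_pt[of _ "(a0,b0,c0)"]) (use True in \<open>auto simp: mon1_def split: if_splits\<close>)
next
  case False
  then show ?thesis unfolding pmul_def
    by (auto simp: mon1_def intro!: sum.neutral)
qed

definition Qp :: "complex \<Rightarrow> complex \<Rightarrow> tpoly" where
  "Qp a1 a2 = quad a1 a2 (- a1 - a2)"

lemma quad_mono: "quad a1 a2 a3 = (\<lambda>m. mon1 (0,1,1) a1 m + mon1 (1,0,1) a2 m + mon1 (1,1,0) a3 m)"
  unfolding quad_def mon1_def by auto

lemma pmul_quad:
  "pmul (quad a1 a2 a3) g (i, j, k) =
     (if 1 \<le> j \<and> 1 \<le> k then a1 * g (i, j - 1, k - 1) else 0) +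
     (if 1 \<le> i \<and> 1 \<le> k then a2 * g (i - 1, j, k - 1) else 0) +
     (if 1 \<le> i \<and> 1 \<le> j then a3 * g (i - 1, j - 1, k) else 0)"
  unfolding quad_mono pmul_add_left by (simp add: pmul_mono)

definition Gf :: "(nat \<Rightarrow> complex) \<Rightarrow> tpoly" where
  "Gf c = (\<lambda>m. if m = (0,3,3) then c 0 else if m = (1,2,3) then c 1
     else if m = (2,1,3) then c 2 else if m = (3,0,3) then c 3
     else if m = (1,3,2) then -3 * c 0 - c 1
     else if m = (2,3,1) then 3 * c 0 + 2 * c 1 + c 2
     else if m = (3,3,0) then - c 0 - c 1 - c 2 - c 3
     else if m = (2,2,2) then -2 * c 1 - 2 * c 2
     else if m = (3,2,1) then c 1 + 2 * c 2 + 3 * c 3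
     else if m = (3,1,2) then - c 2 - 3 * c 3 else 0)"

definition cub :: "complex \<Rightarrow> complex \<Rightarrow> complex \<Rightarrow> complex \<Rightarrow> complex \<Rightarrow> complex \<Rightarrow> nat \<Rightarrow> complex" where
  "cub a1 a2 b1 b2 d1 d2 = (\<lambda>i. if i = 0 then a1*b1*d1
     else if i = 1 then a1*b1*d2 + a1*b2*d1 + a2*b1*d1
     else if i = 2 then a1*b2*d2 + a2*b1*d2 + a2*b2*d1 else a2*b2*d2)"

definition lp :: "((nat \<times> nat \<times> nat) \<times> complex) list \<Rightarrow> tpoly" where
  "lp xs = (\<lambda>m. sum_list (map (\<lambda>(e, c). if m = e then c else 0) xs))"

fun tadd :: "nat \<times> nat \<times> nat \<Rightarrow> nat \<times> nat \<times> nat \<Rightarrow> nat \<times> nat \<times> nat" where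
  "tadd (a, b, c) (a', b', c') = (a + a', b + b', c + c')"

definition lmul :: "((nat \<times> nat \<times> nat) \<times> complex) list \<Rightarrow> ((nat \<times> nat \<times> nat) \<times> complex) list
   \<Rightarrow> ((nat \<times> nat \<times> nat) \<times> complex) list" where
  "lmul xs ys = concat (map (\<lambda>(e, c). map (\<lambda>(e', c'). (tadd e e', c * c')) ys) xs)"

lemma pmul_mono_lp: "pmul (mon1 e c) (lp ys) = lp (map (\<lambda>(e', c'). (tadd e e', c * c')) ys)"
proof (rule ext, clarify)
  fix i j k
  obtain a0 b0 c0 where e: "e = (a0, b0, c0)" by (cases e) auto
  show "pmul (mon1 e c) (lp ys) (i, j, k) = lp (map (\<lambda>(e', c'). (tadd e e', c * c')) ys) (i, j, k)"
    unfolding e pmul_mono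
  proof (induction ys)
    case Nil
    then show ?case by (simp add: lp_def)
  next
    case (Cons y ys)
    obtain a b cc y2 where y: "y = ((a, b, cc), y2)" by (cases y) auto
    show ?case using Cons by (auto simp: lp_def y distrib_left)
  qed
qed

lemma pmul_zero_left: "pmul (\<lambda>m. 0) g = (\<lambda>m. 0)"
  unfolding pmul_def by auto

lemma lp_Cons: "lp ((e, c) # xs) = (\<lambda>m. mon1 e c m + lp xs m)"
  unfolding lp_def mon1_def by auto

lemma lp_append: "lp (xs @ ys) = (\<lambda>m. lp xs m + lp ys m)"
  unfolding lp_def by auto

lemma pmul_lp: "pmul (lp xs) (lp ys) = lp (lmul xs ys)"
proof (induction xs)
  case Nil
  then show ?case by (simp add: lp_def lmul_def pmul_zero_left)
next
  case (Cons x xs)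
  obtain e c where x: "x = (e, c)" by (cases x) auto
  have "lmul (x # xs) ys = map (\<lambda>(e', c'). (tadd e e', c * c')) ys @ lmul xs ys"
    by (simp add: lmul_def x)
  then show ?case
    by (simp add: x lp_Cons lp_append pmul_add_left pmul_mono_lp Cons)
qed

lemma Qp_lp: "Qp a1 a2 = lp [((0,1,1), a1), ((1,0,1), a2), ((1,1,0), - a1 - a2)]"
  unfolding Qp_def quad_def lp_def by auto

definition Tm :: "(nat \<times> nat \<times> nat) set" where
  "Tm = {(0,3,3),(1,2,3),(2,1,3),(3,0,3),(1,3,2),(2,3,1),(3,3,0),(2,2,2),(3,2,1),(3,1,2)}"

lemma prod3_Qp:
  "prod3 (Qp a1 a2) (Qp b1 b2) (Qp d1 d2) = Gf (cub a1 a2 b1 b2 d1 d2)"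
proof (rule ext)
  fix m
  show "prod3 (Qp a1 a2) (Qp b1 b2) (Qp d1 d2) m = Gf (cub a1 a2 b1 b2 d1 d2) m"
  proof (cases "m \<in> Tm")
    case True
    then show ?thesis unfolding prod3_def Qp_lp pmul_lp
      by (simp add: Tm_def lmul_def) (elim disjE; simp add: lp_def Gf_def cub_def algebra_simps)
  next
    case False
    then show ?thesis unfolding prod3_def Qp_lp pmul_lp
      by (simp add: Tm_def lmul_def lp_def Gf_def eval_nat_numeral)
  qed
qed




definition M28 :: "(nat \<times> nat \<times> nat) set" where
  "M28 = {(0,0,6),(0,1,5),(0,2,4),(0,3,3),(0,4,2),(0,5,1),(0,6,0),(1,0,5),(1,1,4),(1,2,3),(1,3,2),(1,4,1),(1,5,0),(2,0,4),(2,1,3),(2,2,2),(2,3,1),(2,4,0),(3,0,3),(3,1,2),(3,2,1),(3,3,0),(4,0,2),(4,1,1),(4,2,0),(5,0,1),(5,1,0),(6,0,0)}"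

lemma le6: "(i::nat) \<le> 6 \<Longrightarrow> i = 0 \<or> i = 1 \<or> i = 2 \<or> i = 3 \<or> i = 4 \<or> i = 5 \<or> i = 6" by arith

lemma mons6: "mons 6 = M28"
proof
  show "M28 \<subseteq> mons 6" unfolding M28_def mons_def by auto
next
  show "mons 6 \<subseteq> M28"
  proof (clarify)
    fix i j k assume "(i, j, k) \<in> mons 6"
    then have k: "k = 6 - i - j" and i6: "i \<le> 6" and j6: "j \<le> 6 - i" by (auto simp: mons_def)
    have di: "i = 0 \<or> i = 1 \<or> i = 2 \<or> i = 3 \<or> i = 4 \<or> i = 5 \<or> i = 6" using le6 i6 by blast
    have dj: "j = 0 \<or> j = 1 \<or> j = 2 \<or> j = 3 \<or> j = 4 \<or> j = 5 \<or> j = 6" using le6 j6 by simp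
    from di dj j6 show "(i, j, k) \<in> M28"
      unfolding M28_def k by (elim disjE) auto
  qed
qed

lemma ffact_0: "ffact 0 i = 1" by (simp add: ffact_def)
lemma ffact_1: "ffact 1 i = of_nat i" by (simp add: ffact_def)
lemma ffact_Suc0: "ffact (Suc 0) i = of_nat i" by (simp add: ffact_def)
lemma ffact_2: "ffact 2 i = of_nat i * of_nat (i - 1)"
  by (simp add: ffact_def eval_nat_numeral lessThan_Suc)

lemma ders3: "(a::nat) + b + c < 3 \<Longrightarrow> (a,b,c) \<in> {(0,0,0),(1,0,0),(0,1,0),(0,0,1),(2,0,0),(0,2,0),(0,0,2),(1,1,0),(1,0,1),(0,1,1)}"
  by (cases a; cases b; cases c) (auto simp: eval_nat_numeral)  

lemma pderiv6: "pderiv_eval 6 f (a, b, c) (x, y, z) =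
   (\<Sum>(i, j, k)\<in>M28. f (i, j, k) * ffact a i * ffact b j * ffact c k
        * x ^ (i - a) * y ^ (j - b) * z ^ (k - c))"
  unfolding pderiv_eval_def mons6 by simp

lemma Gf_SB: "Gf c \<in> SB"
  unfolding SB_def
proof (intro CollectI conjI ballI)
  show "homog 6 (Gf c)" unfolding homog_def mons_def Gf_def by auto
next
  fix p assume "p \<in> Bpts"
  then show "vanishes_to_order 6 (Gf c) 3 p"
    unfolding vanishes_to_order_def Bpts_def
    apply (intro allI impI)
    apply (drule ders3)
    apply (simp only: insert_iff empty_iff prod.inject)
    apply (elim disjE conjE)
    apply (simp_all add: pderiv6 M28_def Gf_def ffact_0 ffact_1 ffact_Suc0 ffact_2 algebra_simps)
    done
qed



lemma SB_Gf:
  assumes "f \<in> SB"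
  shows "f = Gf (\<lambda>i. if i = 0 then f (0,3,3) else if i = 1 then f (1,2,3) else if i = 2 then f (2,1,3) else f (3,0,3))"
proof -
  have H: "homog 6 f" using assms unfolding SB_def by blast
  have V: "\<And>p a b c. p \<in> Bpts \<Longrightarrow> a + b + c < 3 \<Longrightarrow> pderiv_eval 6 f (a,b,c) p = 0"
    using assms unfolding SB_def vanishes_to_order_def by blast
  have z0: "f (0,0,6) = 0"
    using V[of "(0,0,1)" 0 0 0] by (simp add: Bpts_def pderiv6 M28_def ffact_0 ffact_1 ffact_Suc0 ffact_2)
  have z1: "f (0,1,5) = 0"
    using V[of "(0,0,1)" 0 1 0] by (simp add: Bpts_def pderiv6 M28_def ffact_0 ffact_1 ffact_Suc0 ffact_2)
  have z2: "f (0,2,4) = 0"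
    using V[of "(0,0,1)" 0 2 0] by (simp add: Bpts_def pderiv6 M28_def ffact_0 ffact_1 ffact_Suc0 ffact_2)
  have z3: "f (0,4,2) = 0"
    using V[of "(0,1,0)" 0 0 2] by (simp add: Bpts_def pderiv6 M28_def ffact_0 ffact_1 ffact_Suc0 ffact_2)
  have z4: "f (0,5,1) = 0"
    using V[of "(0,1,0)" 0 0 1] by (simp add: Bpts_def pderiv6 M28_def ffact_0 ffact_1 ffact_Suc0 ffact_2)
  have z5: "f (0,6,0) = 0"
    using V[of "(0,1,0)" 0 0 0] by (simp add: Bpts_def pderiv6 M28_def ffact_0 ffact_1 ffact_Suc0 ffact_2)
  have z6: "f (1,0,5) = 0"
    using V[of "(0,0,1)" 1 0 0] by (simp add: Bpts_def pderiv6 M28_def ffact_0 ffact_1 ffact_Suc0 ffact_2)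
  have z7: "f (1,1,4) = 0"
    using V[of "(0,0,1)" 1 1 0] by (simp add: Bpts_def pderiv6 M28_def ffact_0 ffact_1 ffact_Suc0 ffact_2)
  have z8: "f (1,4,1) = 0"
    using V[of "(0,1,0)" 1 0 1] by (simp add: Bpts_def pderiv6 M28_def ffact_0 ffact_1 ffact_Suc0 ffact_2)
  have z9: "f (1,5,0) = 0"
    using V[of "(0,1,0)" 1 0 0] by (simp add: Bpts_def pderiv6 M28_def ffact_0 ffact_1 ffact_Suc0 ffact_2)
  have z10: "f (2,0,4) = 0"
    using V[of "(0,0,1)" 2 0 0] by (simp add: Bpts_def pderiv6 M28_def ffact_0 ffact_1 ffact_Suc0 ffact_2)
  have z11: "f (2,4,0) = 0"
    using V[of "(0,1,0)" 2 0 0] by (simp add: Bpts_def pderiv6 M28_def ffact_0 ffact_1 ffact_Suc0 ffact_2)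
  have z12: "f (4,0,2) = 0"
    using V[of "(1,0,0)" 0 0 2] by (simp add: Bpts_def pderiv6 M28_def ffact_0 ffact_1 ffact_Suc0 ffact_2)
  have z13: "f (4,1,1) = 0"
    using V[of "(1,0,0)" 0 1 1] by (simp add: Bpts_def pderiv6 M28_def ffact_0 ffact_1 ffact_Suc0 ffact_2)
  have z14: "f (4,2,0) = 0"
    using V[of "(1,0,0)" 0 2 0] by (simp add: Bpts_def pderiv6 M28_def ffact_0 ffact_1 ffact_Suc0 ffact_2)
  have z15: "f (5,0,1) = 0"
    using V[of "(1,0,0)" 0 0 1] by (simp add: Bpts_def pderiv6 M28_def ffact_0 ffact_1 ffact_Suc0 ffact_2)
  have z16: "f (5,1,0) = 0"
    using V[of "(1,0,0)" 0 1 0] by (simp add: Bpts_def pderiv6 M28_def ffact_0 ffact_1 ffact_Suc0 ffact_2)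
  have z17: "f (6,0,0) = 0"
    using V[of "(1,0,0)" 0 0 0] by (simp add: Bpts_def pderiv6 M28_def ffact_0 ffact_1 ffact_Suc0 ffact_2)
  have y0: "f (3,1,2) - ((-1) * f (2,1,3) + (-3) * f (3,0,3)) = (3) * pderiv_eval 6 f (0,0,0) (1,1,1) + (-2) * pderiv_eval 6 f (0,1,0) (1,1,1) + ((1/2)) * pderiv_eval 6 f (0,2,0) (1,1,1)"
    by (simp add: pderiv6 M28_def ffact_0 ffact_1 ffact_Suc0 ffact_2 z0[unfolded One_nat_def] z1[unfolded One_nat_def] z2[unfolded One_nat_def] z3[unfolded One_nat_def] z4[unfolded One_nat_def] z5[unfolded One_nat_def] z6[unfolded One_nat_def] z7[unfolded One_nat_def] z8[unfolded One_nat_def] z9[unfolded One_nat_def] z10[unfolded One_nat_def] z11[unfolded One_nat_def] z12[unfolded One_nat_def] z13[unfolded One_nat_def] z14[unfolded One_nat_def] z15[unfolded One_nat_def] z16[unfolded One_nat_def] z17[unfolded One_nat_def] algebra_simps)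
  have w0: "f (3,1,2) = (-1) * f (2,1,3) + (-3) * f (3,0,3)"
    using y0 V[of "(1,1,1)" 0 0 0] V[of "(1,1,1)" 0 1 0] V[of "(1,1,1)" 0 2 0] by (simp add: Bpts_def)
  have y1: "f (3,2,1) - ((1) * f (1,2,3) + (2) * f (2,1,3) + (3) * f (3,0,3)) = (6) * pderiv_eval 6 f (0,0,0) (1,1,1) + (-3) * pderiv_eval 6 f (0,0,1) (1,1,1) + (-2) * pderiv_eval 6 f (0,1,0) (1,1,1) + (1) * pderiv_eval 6 f (0,1,1) (1,1,1)"
    by (simp add: pderiv6 M28_def ffact_0 ffact_1 ffact_Suc0 ffact_2 z0[unfolded One_nat_def] z1[unfolded One_nat_def] z2[unfolded One_nat_def] z3[unfolded One_nat_def] z4[unfolded One_nat_def] z5[unfolded One_nat_def] z6[unfolded One_nat_def] z7[unfolded One_nat_def] z8[unfolded One_nat_def] z9[unfolded One_nat_def] z10[unfolded One_nat_def] z11[unfolded One_nat_def] z12[unfolded One_nat_def] z13[unfolded One_nat_def] z14[unfolded One_nat_def] z15[unfolded One_nat_def] z16[unfolded One_nat_def] z17[unfolded One_nat_def] algebra_simps)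
  have w1: "f (3,2,1) = (1) * f (1,2,3) + (2) * f (2,1,3) + (3) * f (3,0,3)"
    using y1 V[of "(1,1,1)" 0 0 0] V[of "(1,1,1)" 0 0 1] V[of "(1,1,1)" 0 1 0] V[of "(1,1,1)" 0 1 1] by (simp add: Bpts_def)
  have y2: "f (2,2,2) - ((-2) * f (1,2,3) + (-2) * f (2,1,3)) = (-9) * pderiv_eval 6 f (0,0,0) (1,1,1) + (3) * pderiv_eval 6 f (0,0,1) (1,1,1) + (5) * pderiv_eval 6 f (0,1,0) (1,1,1) + (-1) * pderiv_eval 6 f (0,1,1) (1,1,1) + (-1) * pderiv_eval 6 f (0,2,0) (1,1,1)"
    by (simp add: pderiv6 M28_def ffact_0 ffact_1 ffact_Suc0 ffact_2 z0[unfolded One_nat_def] z1[unfolded One_nat_def] z2[unfolded One_nat_def] z3[unfolded One_nat_def] z4[unfolded One_nat_def] z5[unfolded One_nat_def] z6[unfolded One_nat_def] z7[unfolded One_nat_def] z8[unfolded One_nat_def] z9[unfolded One_nat_def] z10[unfolded One_nat_def] z11[unfolded One_nat_def] z12[unfolded One_nat_def] z13[unfolded One_nat_def] z14[unfolded One_nat_def] z15[unfolded One_nat_def] z16[unfolded One_nat_def] z17[unfolded One_nat_def] algebra_simps)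
  have w2: "f (2,2,2) = (-2) * f (1,2,3) + (-2) * f (2,1,3)"
    using y2 V[of "(1,1,1)" 0 0 0] V[of "(1,1,1)" 0 0 1] V[of "(1,1,1)" 0 1 0] V[of "(1,1,1)" 0 1 1] V[of "(1,1,1)" 0 2 0] by (simp add: Bpts_def)
  have y3: "f (3,3,0) - ((-1) * f (0,3,3) + (-1) * f (1,2,3) + (-1) * f (2,1,3) + (-1) * f (3,0,3)) = (1) * pderiv_eval 6 f (0,0,0) (1,1,1) + (-1) * pderiv_eval 6 f (0,0,1) (1,1,1) + ((1/2)) * pderiv_eval 6 f (0,0,2) (1,1,1)"
    by (simp add: pderiv6 M28_def ffact_0 ffact_1 ffact_Suc0 ffact_2 z0[unfolded One_nat_def] z1[unfolded One_nat_def] z2[unfolded One_nat_def] z3[unfolded One_nat_def] z4[unfolded One_nat_def] z5[unfolded One_nat_def] z6[unfolded One_nat_def] z7[unfolded One_nat_def] z8[unfolded One_nat_def] z9[unfolded One_nat_def] z10[unfolded One_nat_def] z11[unfolded One_nat_def] z12[unfolded One_nat_def] z13[unfolded One_nat_def] z14[unfolded One_nat_def] z15[unfolded One_nat_def] z16[unfolded One_nat_def] z17[unfolded One_nat_def] algebra_simps)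
  have w3: "f (3,3,0) = (-1) * f (0,3,3) + (-1) * f (1,2,3) + (-1) * f (2,1,3) + (-1) * f (3,0,3)"
    using y3 V[of "(1,1,1)" 0 0 0] V[of "(1,1,1)" 0 0 1] V[of "(1,1,1)" 0 0 2] by (simp add: Bpts_def)
  have y4: "f (2,3,1) - ((3) * f (0,3,3) + (2) * f (1,2,3) + (1) * f (2,1,3)) = (-6) * pderiv_eval 6 f (0,0,0) (1,1,1) + (4) * pderiv_eval 6 f (0,0,1) (1,1,1) + (-1) * pderiv_eval 6 f (0,0,2) (1,1,1) + (2) * pderiv_eval 6 f (0,1,0) (1,1,1) + (-1) * pderiv_eval 6 f (0,1,1) (1,1,1)"
    by (simp add: pderiv6 M28_def ffact_0 ffact_1 ffact_Suc0 ffact_2 z0[unfolded One_nat_def] z1[unfolded One_nat_def] z2[unfolded One_nat_def] z3[unfolded One_nat_def] z4[unfolded One_nat_def] z5[unfolded One_nat_def] z6[unfolded One_nat_def] z7[unfolded One_nat_def] z8[unfolded One_nat_def] z9[unfolded One_nat_def] z10[unfolded One_nat_def] z11[unfolded One_nat_def] z12[unfolded One_nat_def] z13[unfolded One_nat_def] z14[unfolded One_nat_def] z15[unfolded One_nat_def] z16[unfolded One_nat_def] z17[unfolded One_nat_def] algebra_simps)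
  have w4: "f (2,3,1) = (3) * f (0,3,3) + (2) * f (1,2,3) + (1) * f (2,1,3)"
    using y4 V[of "(1,1,1)" 0 0 0] V[of "(1,1,1)" 0 0 1] V[of "(1,1,1)" 0 0 2] V[of "(1,1,1)" 0 1 0] V[of "(1,1,1)" 0 1 1] by (simp add: Bpts_def)
  have y5: "f (1,3,2) - ((-3) * f (0,3,3) + (-1) * f (1,2,3)) = (6) * pderiv_eval 6 f (0,0,0) (1,1,1) + (-3) * pderiv_eval 6 f (0,0,1) (1,1,1) + ((1/2)) * pderiv_eval 6 f (0,0,2) (1,1,1) + (-3) * pderiv_eval 6 f (0,1,0) (1,1,1) + (1) * pderiv_eval 6 f (0,1,1) (1,1,1) + ((1/2)) * pderiv_eval 6 f (0,2,0) (1,1,1)"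
    by (simp add: pderiv6 M28_def ffact_0 ffact_1 ffact_Suc0 ffact_2 z0[unfolded One_nat_def] z1[unfolded One_nat_def] z2[unfolded One_nat_def] z3[unfolded One_nat_def] z4[unfolded One_nat_def] z5[unfolded One_nat_def] z6[unfolded One_nat_def] z7[unfolded One_nat_def] z8[unfolded One_nat_def] z9[unfolded One_nat_def] z10[unfolded One_nat_def] z11[unfolded One_nat_def] z12[unfolded One_nat_def] z13[unfolded One_nat_def] z14[unfolded One_nat_def] z15[unfolded One_nat_def] z16[unfolded One_nat_def] z17[unfolded One_nat_def] algebra_simps)
  have w5: "f (1,3,2) = (-3) * f (0,3,3) + (-1) * f (1,2,3)"
    using y5 V[of "(1,1,1)" 0 0 0] V[of "(1,1,1)" 0 0 1] V[of "(1,1,1)" 0 0 2] V[of "(1,1,1)" 0 1 0] V[of "(1,1,1)" 0 1 1] V[of "(1,1,1)" 0 2 0] by (simp add: Bpts_def)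
  show ?thesis
  proof (rule ext)
    fix m
    show "f m = Gf (\<lambda>i. if i = 0 then f (0,3,3) else if i = 1 then f (1,2,3) else if i = 2 then f (2,1,3) else f (3,0,3)) m"
    proof (cases "m \<in> M28")
      case True
      then show ?thesis unfolding M28_def
        by (simp only: insert_iff empty_iff) (elim disjE; simp add: Gf_def z0[unfolded One_nat_def] z1[unfolded One_nat_def] z2[unfolded One_nat_def] z3[unfolded One_nat_def] z4[unfolded One_nat_def] z5[unfolded One_nat_def] z6[unfolded One_nat_def] z7[unfolded One_nat_def] z8[unfolded One_nat_def] z9[unfolded One_nat_def] z10[unfolded One_nat_def] z11[unfolded One_nat_def] z12[unfolded One_nat_def] z13[unfolded One_nat_def] z14[unfolded One_nat_def] z15[unfolded One_nat_def] z16[unfolded One_nat_def] z17[unfolded One_nat_def] w0[unfolded One_nat_def] w1[unfolded One_nat_def] w2[unfolded One_nat_def] w3[unfolded One_nat_def] w4[unfolded One_nat_def] w5[unfolded One_nat_def] algebra_simps)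
    next
      case False
      then have "f m = 0" using H unfolding homog_def mons6 by blast
      moreover have "m \<notin> Tm" using False unfolding Tm_def M28_def by auto
      ultimately show ?thesis unfolding Gf_def Tm_def by auto
    qed
  qed
qed



definition prp :: "complex \<Rightarrow> complex \<Rightarrow> complex \<Rightarrow> complex \<Rightarrow> bool" where
  "prp x1 x2 u1 u2 \<longleftrightarrow> (\<exists>c. c \<noteq> 0 \<and> u1 = c * x1 \<and> u2 = c * x2)"

lemma det0:
  assumes "x1 \<noteq> 0 \<or> x2 \<noteq> 0" "u1 \<noteq> 0 \<or> u2 \<noteq> 0" "x1 * u2 - x2 * u1 = 0"
  shows "prp x1 x2 u1 u2"
proof (cases "x1 = 0")
  case True
  with assms have x2: "x2 \<noteq> 0" and "u1 = 0" by auto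
  with assms have "u2 \<noteq> 0" by auto
  show ?thesis unfolding prp_def
    by (rule exI[of _ "u2 / x2"]) (use x2 \<open>u1 = 0\<close> True \<open>u2 \<noteq> 0\<close> in auto)
next
  case False
  have u2: "u2 = u1 * x2 / x1" using assms(3) False by (simp add: field_simps)
  have "u1 \<noteq> 0" using assms(2) u2 by auto
  show ?thesis unfolding prp_def
    by (rule exI[of _ "u1 / x1"]) (use False \<open>u1 \<noteq> 0\<close> u2 in auto)
qed

lemma C2:
  fixes b1 b2 d1 d2 e1 e2 :: complex
  assumes "b1 \<noteq> 0 \<or> b2 \<noteq> 0" "b1*d1 = b1*e1" "b1*d2 + b2*d1 = b1*e2 + b2*e1" "b2*d2 = b2*e2"
  shows "d1 = e1 \<and> d2 = e2"
proof (cases "b1 = 0")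
  case True
  then have b2: "b2 \<noteq> 0" using assms(1) by simp
  have "b2 * d1 = b2 * e1" using assms(3) True by simp
  then show ?thesis using assms(4) b2 by simp
next
  case False
  then have "d1 = e1" using assms by auto
  then show ?thesis using assms False by auto
qed

lemma C3:
  fixes a1 a2 e0 e1 e2 f0 f1 f2 :: complex
  assumes "a1 \<noteq> 0 \<or> a2 \<noteq> 0" "a1*e0 = a1*f0" "a1*e1 + a2*e0 = a1*f1 + a2*f0"
    "a1*e2 + a2*e1 = a1*f2 + a2*f1" "a2*e2 = a2*f2"
  shows "e0 = f0 \<and> e1 = f1 \<and> e2 = f2"
proof (cases "a1 = 0")
  case True
  then have a2: "a2 \<noteq> 0" using assms by auto
  have "a2 * e0 = a2 * f0" "a2 * e1 = a2 * f1" using assms(3,4) True by simp_all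
  then show ?thesis using assms(5) a2 by simp
next
  case False
  then have "e0 = f0" using assms by auto
  then have "e1 = f1" using assms False by auto
  then show ?thesis using assms False \<open>e0 = f0\<close> by auto
qed

lemma root3:
  fixes c0 c1 c2 c3 :: complex
  assumes "c0 \<noteq> 0"
  shows "\<exists>r. c0*r^3 + c1*r^2 + c2*r + c3 = 0"
proof -
  have "\<exists>z. poly [:c3, c2, c1, c0:] z = 0"
    by (rule fundamental_theorem_of_algebra_alt) (use assms in auto)
  then obtain z where "poly [:c3, c2, c1, c0:] z = 0" by blast
  then show ?thesis by (intro exI[of _ z]) (simp add: algebra_simps power2_eq_square power3_eq_cube)
qed

lemma root2:
  fixes c0 c1 c2 :: complex
  assumes "c0 \<noteq> 0"
  shows "\<exists>r. c0*r^2 + c1*r + c2 = 0"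
proof -
  have "\<exists>z. poly [:c2, c1, c0:] z = 0"
    by (rule fundamental_theorem_of_algebra_alt) (use assms in auto)
  then obtain z where "poly [:c2, c1, c0:] z = 0" by blast
  then show ?thesis by (intro exI[of _ z]) (simp add: algebra_simps power2_eq_square)
qed

lemma QF:
  fixes e0 e1 e2 :: complex
  shows "\<exists>b1 b2 d1 d2. e0 = b1*d1 \<and> e1 = b1*d2 + b2*d1 \<and> e2 = b2*d2"
proof (cases "e0 = 0")
  case True
  show ?thesis by (rule exI[of _ 0], rule exI[of _ 1], rule exI[of _ e1], rule exI[of _ e2]) (simp add: True)
next
  case False
  obtain r where r: "e0*r^2 + e1*r + e2 = 0" using root2[OF False] by blast
  have "e2 = (- r) * (e1 + e0 * r)" using r by (simp add: algebra_simps power2_eq_square eq_neg_iff_add_eq_0)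
  then show ?thesis
    by (intro exI[of _ 1] exI[of _ "- r"] exI[of _ e0] exI[of _ "e1 + e0 * r"]) (simp add: algebra_simps)
qed

lemma CF:
  fixes c0 c1 c2 c3 :: complex
  shows "\<exists>a1 a2 b1 b2 d1 d2. c0 = a1*b1*d1 \<and> c1 = a1*b1*d2 + a1*b2*d1 + a2*b1*d1
     \<and> c2 = a1*b2*d2 + a2*b1*d2 + a2*b2*d1 \<and> c3 = a2*b2*d2"
proof (cases "c0 = 0")
  case True
  obtain b1 b2 d1 d2 where q: "c1 = b1*d1" "c2 = b1*d2 + b2*d1" "c3 = b2*d2" using QF[of c1 c2 c3] by blast
  show ?thesis
    by (intro exI[of _ 0] exI[of _ 1] exI[of _ b1] exI[of _ b2] exI[of _ d1] exI[of _ d2]) (simp add: True q)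
next
  case False
  obtain r where r: "c0*r^3 + c1*r^2 + c2*r + c3 = 0" using root3[OF False] by blast
  obtain b1 b2 d1 d2 where q: "c0 = b1*d1" "c1 + c0*r = b1*d2 + b2*d1" "c2 + c1*r + c0*r^2 = b2*d2"
    using QF[of c0 "c1 + c0*r" "c2 + c1*r + c0*r^2"] by blast
  have h1: "c1 = b1*d2 + b2*d1 - r*b1*d1" using q(1,2) by (simp add: algebra_simps eq_diff_eq)
  have "c2 = (c2 + c1*r + c0*r^2) - r*(c1 + c0*r)" by (simp add: algebra_simps power2_eq_square)
  then have h2: "c2 = b2*d2 - r*(b1*d2 + b2*d1)" unfolding q(2,3) .
  have "c3 = (c0*r^3 + c1*r^2 + c2*r + c3) - r * (c2 + c1*r + c0*r^2)"
    by (simp add: algebra_simps power2_eq_square power3_eq_cube)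
  then have h3: "c3 = - r * (b2*d2)" unfolding r q(3) by simp
  show ?thesis
    by (intro exI[of _ 1] exI[of _ "- r"] exI[of _ b1] exI[of _ b2] exI[of _ d1] exI[of _ d2])
       (simp add: q(1) h1 h2 h3 algebra_simps)
qed




lemma U2a:
  fixes x1 x2 y1 y2 u1 u2 v1 v2 k :: complex
  assumes nz: "x1 \<noteq> 0 \<or> x2 \<noteq> 0" "y1 \<noteq> 0 \<or> y2 \<noteq> 0" and k: "k \<noteq> 0"
    and e: "u1*v1 = k*(x1*y1)" "u1*v2 + u2*v1 = k*(x1*y2 + x2*y1)" "u2*v2 = k*(x2*y2)"
    and p: "prp x1 x2 u1 u2"
  shows "prp y1 y2 v1 v2"
proof -
  obtain m where m: "m \<noteq> 0" "u1 = m * x1" "u2 = m * x2" using p unfolding prp_def by blast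
  have "x1 * (m*v1) = x1 * (k*y1)" "x1 * (m*v2) + x2 * (m*v1) = x1 * (k*y2) + x2 * (k*y1)"
       "x2 * (m*v2) = x2 * (k*y2)"
    using e unfolding m by (simp_all add: algebra_simps)
  from C2[OF nz(1) this] have "m*v1 = k*y1" "m*v2 = k*y2" by auto
  then have "v1 = (k/m) * y1" "v2 = (k/m) * y2" using m(1) by (simp_all add: field_simps)
  then show ?thesis unfolding prp_def using k m(1) by (intro exI[of _ "k/m"]) simp
qed

lemma U2:
  fixes x1 x2 y1 y2 u1 u2 v1 v2 k :: complex
  assumes nz: "x1 \<noteq> 0 \<or> x2 \<noteq> 0" "y1 \<noteq> 0 \<or> y2 \<noteq> 0" "u1 \<noteq> 0 \<or> u2 \<noteq> 0" and k: "k \<noteq> 0"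
    and e: "u1*v1 = k*(x1*y1)" "u1*v2 + u2*v1 = k*(x1*y2 + x2*y1)" "u2*v2 = k*(x2*y2)"
  shows "(prp x1 x2 u1 u2 \<and> prp y1 y2 v1 v2) \<or> (prp y1 y2 u1 u2 \<and> prp x1 x2 v1 v2)"
proof -
  have "k * ((x1*u2 - x2*u1) * (y1*u2 - y2*u1)) =
     (k*(x1*y1))*(u2*u2) - (k*(x1*y2 + x2*y1))*(u1*u2) + (k*(x2*y2))*(u1*u1)"
    by (simp add: algebra_simps)
  also have "\<dots> = (u1*v1)*(u2*u2) - (u1*v2 + u2*v1)*(u1*u2) + (u2*v2)*(u1*u1)" unfolding e ..
  also have "\<dots> = 0" by (simp add: algebra_simps)
  finally have "x1*u2 - x2*u1 = 0 \<or> y1*u2 - y2*u1 = 0" using k by simp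
  then show ?thesis
  proof
    assume "x1*u2 - x2*u1 = 0"
    then have p: "prp x1 x2 u1 u2" using det0 nz by blast
    show ?thesis using U2a[OF nz(1,2) k e p] p by blast
  next
    assume "y1*u2 - y2*u1 = 0"
    then have p: "prp y1 y2 u1 u2" using det0 nz by blast
    have e': "u1*v1 = k*(y1*x1)" "u1*v2 + u2*v1 = k*(y1*x2 + y2*x1)" "u2*v2 = k*(y2*x2)"
      using e by (simp_all add: algebra_simps)
    show ?thesis using U2a[OF nz(2,1) k e' p] p by blast
  qed
qed

lemma U3a:
  fixes x1 x2 y1 y2 z1 z2 u1 u2 v1 v2 w1 w2 k :: complex
  assumes nz: "x1 \<noteq> 0 \<or> x2 \<noteq> 0" "y1 \<noteq> 0 \<or> y2 \<noteq> 0" "z1 \<noteq> 0 \<or> z2 \<noteq> 0" "v1 \<noteq> 0 \<or> v2 \<noteq> 0"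
    and k: "k \<noteq> 0"
    and e: "u1*v1*w1 = k*(x1*y1*z1)"
      "u1*v1*w2 + u1*v2*w1 + u2*v1*w1 = k*(x1*y1*z2 + x1*y2*z1 + x2*y1*z1)"
      "u1*v2*w2 + u2*v1*w2 + u2*v2*w1 = k*(x1*y2*z2 + x2*y1*z2 + x2*y2*z1)"
      "u2*v2*w2 = k*(x2*y2*z2)"
    and p: "prp x1 x2 u1 u2"
  shows "(prp y1 y2 v1 v2 \<and> prp z1 z2 w1 w2) \<or> (prp z1 z2 v1 v2 \<and> prp y1 y2 w1 w2)"
proof -
  obtain m where m: "m \<noteq> 0" "u1 = m * x1" "u2 = m * x2" using p unfolding prp_def by blast
  have "x1 * (m*(v1*w1)) = x1 * (k*(y1*z1))"
    "x1 * (m*(v1*w2 + v2*w1)) + x2 * (m*(v1*w1)) = x1 * (k*(y1*z2 + y2*z1)) + x2 * (k*(y1*z1))"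
    "x1 * (m*(v2*w2)) + x2 * (m*(v1*w2 + v2*w1)) = x1 * (k*(y2*z2)) + x2 * (k*(y1*z2 + y2*z1))"
    "x2 * (m*(v2*w2)) = x2 * (k*(y2*z2))"
    using e unfolding m by (simp_all add: algebra_simps)
  from C3[OF nz(1) this] have q: "m*(v1*w1) = k*(y1*z1)" "m*(v1*w2 + v2*w1) = k*(y1*z2 + y2*z1)"
    "m*(v2*w2) = k*(y2*z2)" by auto
  have km: "k/m \<noteq> 0" using k m(1) by simp
  have "v1*w1 = (k/m)*(y1*z1)" "v1*w2 + v2*w1 = (k/m)*(y1*z2 + y2*z1)" "v2*w2 = (k/m)*(y2*z2)"
    using q m(1) by (simp_all add: field_simps)
  from U2[OF nz(2,3,4) km this] show ?thesis .
qed

lemma U3: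
  fixes x1 x2 y1 y2 z1 z2 u1 u2 v1 v2 w1 w2 k :: complex
  assumes nz: "x1 \<noteq> 0 \<or> x2 \<noteq> 0" "y1 \<noteq> 0 \<or> y2 \<noteq> 0" "z1 \<noteq> 0 \<or> z2 \<noteq> 0"
     "u1 \<noteq> 0 \<or> u2 \<noteq> 0" "v1 \<noteq> 0 \<or> v2 \<noteq> 0"
    and k: "k \<noteq> 0"
    and e: "u1*v1*w1 = k*(x1*y1*z1)"
      "u1*v1*w2 + u1*v2*w1 + u2*v1*w1 = k*(x1*y1*z2 + x1*y2*z1 + x2*y1*z1)"
      "u1*v2*w2 + u2*v1*w2 + u2*v2*w1 = k*(x1*y2*z2 + x2*y1*z2 + x2*y2*z1)"
      "u2*v2*w2 = k*(x2*y2*z2)"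
  shows "(prp x1 x2 u1 u2 \<and> prp y1 y2 v1 v2 \<and> prp z1 z2 w1 w2) \<or>
         (prp x1 x2 u1 u2 \<and> prp z1 z2 v1 v2 \<and> prp y1 y2 w1 w2) \<or>
         (prp y1 y2 u1 u2 \<and> prp x1 x2 v1 v2 \<and> prp z1 z2 w1 w2) \<or>
         (prp y1 y2 u1 u2 \<and> prp z1 z2 v1 v2 \<and> prp x1 x2 w1 w2) \<or>
         (prp z1 z2 u1 u2 \<and> prp x1 x2 v1 v2 \<and> prp y1 y2 w1 w2) \<or>
         (prp z1 z2 u1 u2 \<and> prp y1 y2 v1 v2 \<and> prp x1 x2 w1 w2)"
proof -
  have "k * ((x1*u2 - x2*u1) * (y1*u2 - y2*u1) * (z1*u2 - z2*u1)) =
     (k*(x1*y1*z1))*(u2*u2*u2) - (k*(x1*y1*z2 + x1*y2*z1 + x2*y1*z1))*(u1*u2*u2)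
     + (k*(x1*y2*z2 + x2*y1*z2 + x2*y2*z1))*(u1*u1*u2) - (k*(x2*y2*z2))*(u1*u1*u1)"
    by (simp add: algebra_simps)
  also have "\<dots> = (u1*v1*w1)*(u2*u2*u2) - (u1*v1*w2 + u1*v2*w1 + u2*v1*w1)*(u1*u2*u2)
     + (u1*v2*w2 + u2*v1*w2 + u2*v2*w1)*(u1*u1*u2) - (u2*v2*w2)*(u1*u1*u1)" unfolding e ..
  also have "\<dots> = 0" by (simp add: algebra_simps)
  finally have "x1*u2 - x2*u1 = 0 \<or> y1*u2 - y2*u1 = 0 \<or> z1*u2 - z2*u1 = 0" using k by simp
  then show ?thesis
  proof (elim disjE)
    assume "x1*u2 - x2*u1 = 0"
    then have p: "prp x1 x2 u1 u2" using det0 nz by blast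
    show ?thesis using U3a[OF nz(1,2,3,5) k e p] p by blast
  next
    assume "y1*u2 - y2*u1 = 0"
    then have p: "prp y1 y2 u1 u2" using det0 nz by blast
    have e': "u1*v1*w1 = k*(y1*x1*z1)"
      "u1*v1*w2 + u1*v2*w1 + u2*v1*w1 = k*(y1*x1*z2 + y1*x2*z1 + y2*x1*z1)"
      "u1*v2*w2 + u2*v1*w2 + u2*v2*w1 = k*(y1*x2*z2 + y2*x1*z2 + y2*x2*z1)"
      "u2*v2*w2 = k*(y2*x2*z2)"
      using e by (simp_all add: algebra_simps)
    show ?thesis using U3a[OF nz(2,1,3,5) k e' p] p by blast
  next
    assume "z1*u2 - z2*u1 = 0"
    then have p: "prp z1 z2 u1 u2" using det0 nz by blast
    have e': "u1*v1*w1 = k*(z1*x1*y1)"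
      "u1*v1*w2 + u1*v2*w1 + u2*v1*w1 = k*(z1*x1*y2 + z1*x2*y1 + z2*x1*y1)"
      "u1*v2*w2 + u2*v1*w2 + u2*v2*w1 = k*(z1*x2*y2 + z2*x1*y2 + z2*x2*y1)"
      "u2*v2*w2 = k*(z2*x2*y2)"
      using e by (simp_all add: algebra_simps)
    show ?thesis using U3a[OF nz(3,1,2,5) k e' p] p by blast
  qed
qed



lemma QB_iff: "q \<in> QB \<longleftrightarrow> (\<exists>a1 a2. q = Qp a1 a2)"
proof
  assume "q \<in> QB"
  then obtain a1 a2 a3 where "q = quad a1 a2 a3" "a1 + a2 + a3 = 0" unfolding QB_def by blast
  moreover have "a3 = (a1 + a2 + a3) - a1 - a2" by simp
  ultimately have "q = Qp a1 a2" unfolding Qp_def by simp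
  then show "\<exists>a1 a2. q = Qp a1 a2" by blast
next
  assume "\<exists>a1 a2. q = Qp a1 a2"
  then obtain a1 a2 where "q = Qp a1 a2" by blast
  then show "q \<in> QB" unfolding QB_def Qp_def by force
qed

lemma Qp_zero: "Qp a1 a2 = zpoly \<longleftrightarrow> a1 = 0 \<and> a2 = 0"
proof
  assume h: "Qp a1 a2 = zpoly"
  have "Qp a1 a2 (0,1,1) = 0" "Qp a1 a2 (1,0,1) = 0" using h unfolding zpoly_def by simp_all
  then show "a1 = 0 \<and> a2 = 0" unfolding Qp_def quad_def by simp
next
  assume "a1 = 0 \<and> a2 = 0"
  then show "Qp a1 a2 = zpoly" unfolding Qp_def quad_def zpoly_def by auto
qed

lemma prop_Qp: "proportional (Qp a1 a2) (Qp b1 b2) \<longleftrightarrow> prp a1 a2 b1 b2"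
proof
  assume "proportional (Qp a1 a2) (Qp b1 b2)"
  then obtain c where c: "c \<noteq> 0" "Qp b1 b2 = (\<lambda>m. c * Qp a1 a2 m)" unfolding proportional_def by blast
  have "Qp b1 b2 (0,1,1) = c * Qp a1 a2 (0,1,1)" "Qp b1 b2 (1,0,1) = c * Qp a1 a2 (1,0,1)"
    using c(2) by simp_all
  then show "prp a1 a2 b1 b2" unfolding prp_def Qp_def quad_def using c(1) by auto
next
  assume "prp a1 a2 b1 b2"
  then obtain c where c: "c \<noteq> 0" "b1 = c * a1" "b2 = c * a2" unfolding prp_def by blast
  show "proportional (Qp a1 a2) (Qp b1 b2)" unfolding proportional_def
    by (rule exI[of _ c]) (use c in \<open>auto simp: Qp_def quad_def algebra_simps\<close>)
qed

lemma Gf_vals: "Gf c (0,3,3) = c 0" "Gf c (1,2,3) = c 1" "Gf c (2,1,3) = c 2" "Gf c (3,0,3) = c 3"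
  unfolding Gf_def by simp_all

lemma Gf_eq: "Gf c = Gf c' \<Longrightarrow> c 0 = c' 0 \<and> c 1 = c' 1 \<and> c 2 = c' 2 \<and> c 3 = c' 3"
  by (metis Gf_vals)

lemma Gf_cong:
  assumes "c 0 = c' 0" "c 1 = c' 1" "c 2 = c' 2" "c 3 = c' 3"
  shows "Gf c = Gf c'"
  unfolding Gf_def by (simp only: assms)

lemma Gf_scale: "(\<lambda>m. k * Gf c m) = Gf (\<lambda>i. k * c i)"
  unfolding Gf_def by (rule ext) (simp add: algebra_simps)

lemma Gf_zero: "Gf c = zpoly \<Longrightarrow> c 0 = 0 \<and> c 1 = 0 \<and> c 2 = 0 \<and> c 3 = 0"
  unfolding zpoly_def by (metis Gf_vals)

lemma sum4: "(\<Sum>i<4::nat. h i) = h 0 + h 1 + h 2 + (h 3 :: complex)"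
  by (simp add: eval_nat_numeral)

lemma gsum: "(\<lambda>m. \<Sum>i<4. c i * Gf (\<lambda>j. if j = i then 1 else 0) m) = Gf c"
  by (rule ext) (simp add: sum4 Gf_def)

lemma cub_nz:
  assumes "a1 \<noteq> 0 \<or> a2 \<noteq> 0" "b1 \<noteq> 0 \<or> b2 \<noteq> 0" "d1 \<noteq> 0 \<or> d2 \<noteq> 0"
  shows "Gf (cub a1 a2 b1 b2 d1 d2) \<noteq> zpoly"
proof
  assume "Gf (cub a1 a2 b1 b2 d1 d2) = zpoly"
  from Gf_zero[OF this] have "a1 * (b1*d1) = a1 * 0" "a1 * (b1*d2 + b2*d1) + a2 * (b1*d1) = a1 * 0 + a2 * 0"
    "a1 * (b2*d2) + a2 * (b1*d2 + b2*d1) = a1 * 0 + a2 * 0" "a2 * (b2*d2) = a2 * 0"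
    unfolding cub_def by (simp_all add: algebra_simps)
  from C3[OF assms(1) this] have "b1 * d1 = b1 * 0" "b1*d2 + b2*d1 = b1 * 0 + b2 * 0" "b2*d2 = b2 * 0" by simp_all
  from C2[OF assms(2) this] assms(3) show False by simp
qed

lemma cub_sym1: "cub a1 a2 b1 b2 d1 d2 = cub b1 b2 a1 a2 d1 d2"
  unfolding cub_def by (rule ext) (simp add: algebra_simps)
lemma cub_sym2: "cub a1 a2 b1 b2 d1 d2 = cub a1 a2 d1 d2 b1 b2"
  unfolding cub_def by (rule ext) (simp add: algebra_simps)

lemma prop_cub:
  assumes "prp x1 x2 u1 u2" "prp y1 y2 v1 v2" "prp z1 z2 w1 w2"
  shows "proportional (Gf (cub x1 x2 y1 y2 z1 z2)) (Gf (cub u1 u2 v1 v2 w1 w2))"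
proof -
  obtain a where a: "a \<noteq> 0" "u1 = a * x1" "u2 = a * x2" using assms(1) unfolding prp_def by blast
  obtain b where b: "b \<noteq> 0" "v1 = b * y1" "v2 = b * y2" using assms(2) unfolding prp_def by blast
  obtain c where c: "c \<noteq> 0" "w1 = c * z1" "w2 = c * z2" using assms(3) unfolding prp_def by blast
  have "Gf (cub u1 u2 v1 v2 w1 w2) = Gf (\<lambda>i. (a*b*c) * cub x1 x2 y1 y2 z1 z2 i)"
    by (rule Gf_cong) (simp_all add: a b c cub_def algebra_simps)
  then show ?thesis unfolding proportional_def Gf_scale[symmetric] using a b c
    by (intro exI[of _ "a*b*c"]) simp
qed

lemma perm3:
  assumes "bij_betw \<sigma> {0::nat, 1, 2} {0, 1, 2}"
  shows "(\<sigma> 0 = 0 \<and> \<sigma> 1 = 1 \<and> \<sigma> 2 = 2) \<or> (\<sigma> 0 = 0 \<and> \<sigma> 1 = 2 \<and> \<sigma> 2 = 1) \<or>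
         (\<sigma> 0 = 1 \<and> \<sigma> 1 = 0 \<and> \<sigma> 2 = 2) \<or> (\<sigma> 0 = 1 \<and> \<sigma> 1 = 2 \<and> \<sigma> 2 = 0) \<or>
         (\<sigma> 0 = 2 \<and> \<sigma> 1 = 0 \<and> \<sigma> 2 = 1) \<or> (\<sigma> 0 = 2 \<and> \<sigma> 1 = 1 \<and> \<sigma> 2 = 0)"
proof -
  have r: "\<sigma> 0 \<in> {0,1,2}" "\<sigma> 1 \<in> {0,1,2}" "\<sigma> 2 \<in> {0,1,2}"
    using assms unfolding bij_betw_def by auto
  have inj: "inj_on \<sigma> {0::nat,1,2}" using assms unfolding bij_betw_def by blast
  have i: "\<sigma> 0 \<noteq> \<sigma> 1" "\<sigma> 0 \<noteq> \<sigma> 2" "\<sigma> 1 \<noteq> \<sigma> 2"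
    by (rule inj_on_contraD[OF inj]; simp)+
  show ?thesis using r i by auto
qed

lemma mkbij:
  assumes "a \<in> {0::nat,1,2}" "b \<in> {0::nat,1,2}" "c \<in> {0::nat,1,2}" "a \<noteq> b" "a \<noteq> c" "b \<noteq> c"
  shows "bij_betw (\<lambda>i. if i = 0 then a else if i = 1 then b else c) {0::nat, 1, 2} {0, 1, 2}"
  unfolding bij_betw_def inj_on_def using assms by auto

theorem lemma3p3:
  shows "(\<exists>g :: nat \<Rightarrow> tpoly.
            SB = {(\<lambda>m. \<Sum>i<4. c i * g i m) | c. True} \<and>
            (\<forall>c. (\<lambda>m. \<Sum>i<4. c i * g i m) = zpoly \<longrightarrow> (\<forall>i<4. c i = 0)))
       \<and> (\<forall>q1\<in>QB. \<forall>q2\<in>QB. \<forall>q3\<in>QB. prod3 q1 q2 q3 \<in> SB)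
       \<and> (\<forall>q1\<in>QB. \<forall>q2\<in>QB. \<forall>q3\<in>QB.
            q1 \<noteq> zpoly \<and> q2 \<noteq> zpoly \<and> q3 \<noteq> zpoly \<longrightarrow> prod3 q1 q2 q3 \<noteq> zpoly)
       \<and> (\<forall>f\<in>SB. f \<noteq> zpoly \<longrightarrow>
            (\<exists>q1\<in>QB. \<exists>q2\<in>QB. \<exists>q3\<in>QB. proportional (prod3 q1 q2 q3) f))
       \<and> (\<forall>q q' :: nat \<Rightarrow> tpoly.
            (\<forall>i<3. q i \<in> QB - {zpoly} \<and> q' i \<in> QB - {zpoly}) \<longrightarrow>
            (proportional (prod3 (q 0) (q 1) (q 2)) (prod3 (q' 0) (q' 1) (q' 2))
             \<longleftrightarrow> (\<exists>\<sigma>. bij_betw \<sigma> {0::nat, 1, 2} {0, 1, 2} \<and>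
                       (\<forall>i<3. proportional (q (\<sigma> i)) (q' i)))))"
proof -
  define g where "g = (\<lambda>i::nat. Gf (\<lambda>j. if j = i then 1 else 0))"
  have SBeq: "SB = {Gf c | c. True}"
  proof
    show "SB \<subseteq> {Gf c | c. True}"
    proof
      fix f assume "f \<in> SB"
      from SB_Gf[OF this] show "f \<in> {Gf c | c. True}" by blast
    qed
  next
    show "{Gf c | c. True} \<subseteq> SB" using Gf_SB by blast
  qed
  have lt4: "\<And>i::nat. i < 4 \<Longrightarrow> i = 0 \<or> i = 1 \<or> i = 2 \<or> i = 3" by arith
  have lt3: "\<And>i::nat. i < 3 \<Longrightarrow> i = 0 \<or> i = 1 \<or> i = 2" by arith
  have P1: "SB = {(\<lambda>m. \<Sum>i<4. c i * g i m) | c. True} \<and>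
            (\<forall>c. (\<lambda>m. \<Sum>i<4. c i * g i m) = zpoly \<longrightarrow> (\<forall>i<4. c i = 0))"
    unfolding g_def gsum
  proof (intro conjI allI impI)
    show "SB = {Gf c | c. True}" by (rule SBeq)
  next
    fix c :: "nat \<Rightarrow> complex" and i :: nat
    assume "Gf c = zpoly" "i < 4"
    then show "c i = 0" using Gf_zero lt4 by blast
  qed
  have P2: "\<forall>q1\<in>QB. \<forall>q2\<in>QB. \<forall>q3\<in>QB. prod3 q1 q2 q3 \<in> SB"
    by (auto simp: QB_iff prod3_Qp Gf_SB)
  have P3: "\<forall>q1\<in>QB. \<forall>q2\<in>QB. \<forall>q3\<in>QB.
            q1 \<noteq> zpoly \<and> q2 \<noteq> zpoly \<and> q3 \<noteq> zpoly \<longrightarrow> prod3 q1 q2 q3 \<noteq> zpoly"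
    by (auto simp: QB_iff prod3_Qp Qp_zero cub_nz)
  have P4: "\<forall>f\<in>SB. f \<noteq> zpoly \<longrightarrow>
            (\<exists>q1\<in>QB. \<exists>q2\<in>QB. \<exists>q3\<in>QB. proportional (prod3 q1 q2 q3) f)"
  proof (intro ballI impI)
    fix f assume "f \<in> SB" "f \<noteq> zpoly"
    then obtain c where f: "f = Gf c" using SBeq by blast
    obtain a1 a2 b1 b2 d1 d2 where cf: "c 0 = a1*b1*d1" "c 1 = a1*b1*d2 + a1*b2*d1 + a2*b1*d1"
      "c 2 = a1*b2*d2 + a2*b1*d2 + a2*b2*d1" "c 3 = a2*b2*d2"
      using CF[of "c 0" "c 1" "c 2" "c 3"] by blast
    have "prod3 (Qp a1 a2) (Qp b1 b2) (Qp d1 d2) = f"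
      unfolding prod3_Qp f by (rule Gf_cong) (simp_all add: cf cf[unfolded One_nat_def] cub_def)
    moreover have "proportional f f" unfolding proportional_def by (intro exI[of _ 1]) simp
    ultimately show "\<exists>q1\<in>QB. \<exists>q2\<in>QB. \<exists>q3\<in>QB. proportional (prod3 q1 q2 q3) f"
      using QB_iff by metis
  qed
  have P5: "\<forall>q q' :: nat \<Rightarrow> tpoly.
            (\<forall>i<3. q i \<in> QB - {zpoly} \<and> q' i \<in> QB - {zpoly}) \<longrightarrow>
            (proportional (prod3 (q 0) (q 1) (q 2)) (prod3 (q' 0) (q' 1) (q' 2))
             \<longleftrightarrow> (\<exists>\<sigma>. bij_betw \<sigma> {0::nat, 1, 2} {0, 1, 2} \<and>
                       (\<forall>i<3. proportional (q (\<sigma> i)) (q' i))))"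
  proof (intro allI impI)
    fix q q' :: "nat \<Rightarrow> tpoly"
    assume H: "\<forall>i<3. q i \<in> QB - {zpoly} \<and> q' i \<in> QB - {zpoly}"
    have gq: "\<And>i. i < 3 \<Longrightarrow> \<exists>x1 x2. q i = Qp x1 x2 \<and> (x1 \<noteq> 0 \<or> x2 \<noteq> 0)"
      using H by (metis DiffE QB_iff Qp_zero insertCI)
    have gq': "\<And>i. i < 3 \<Longrightarrow> \<exists>x1 x2. q' i = Qp x1 x2 \<and> (x1 \<noteq> 0 \<or> x2 \<noteq> 0)"
      using H by (metis DiffE QB_iff Qp_zero insertCI)
    obtain a1 a2 where qa: "q 0 = Qp a1 a2" and na: "a1 \<noteq> 0 \<or> a2 \<noteq> 0" using gq[of 0] by auto
    obtain b1 b2 where qb: "q 1 = Qp b1 b2" and nb: "b1 \<noteq> 0 \<or> b2 \<noteq> 0" using gq[of 1] by auto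
    obtain d1 d2 where qd: "q 2 = Qp d1 d2" and nd: "d1 \<noteq> 0 \<or> d2 \<noteq> 0" using gq[of 2] by auto
    obtain u1 u2 where qu: "q' 0 = Qp u1 u2" and nu: "u1 \<noteq> 0 \<or> u2 \<noteq> 0" using gq'[of 0] by auto
    obtain v1 v2 where qv: "q' 1 = Qp v1 v2" and nv: "v1 \<noteq> 0 \<or> v2 \<noteq> 0" using gq'[of 1] by auto
    obtain w1 w2 where qw: "q' 2 = Qp w1 w2" and nw: "w1 \<noteq> 0 \<or> w2 \<noteq> 0" using gq'[of 2] by auto
    note qs = qa qb qd qu qv qw
    have pq: "prod3 (q 0) (q 1) (q 2) = Gf (cub a1 a2 b1 b2 d1 d2)"
      "prod3 (q' 0) (q' 1) (q' 2) = Gf (cub u1 u2 v1 v2 w1 w2)" unfolding qs prod3_Qp by simp_all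
    show "proportional (prod3 (q 0) (q 1) (q 2)) (prod3 (q' 0) (q' 1) (q' 2))
             \<longleftrightarrow> (\<exists>\<sigma>. bij_betw \<sigma> {0::nat, 1, 2} {0, 1, 2} \<and>
                       (\<forall>i<3. proportional (q (\<sigma> i)) (q' i)))"
    proof
      assume "proportional (prod3 (q 0) (q 1) (q 2)) (prod3 (q' 0) (q' 1) (q' 2))"
      then obtain k where k: "k \<noteq> 0"
        "Gf (cub u1 u2 v1 v2 w1 w2) = Gf (\<lambda>i. k * cub a1 a2 b1 b2 d1 d2 i)"
        unfolding proportional_def qs prod3_Qp Gf_scale by blast
      from Gf_eq[OF k(2)] have e:
        "u1*v1*w1 = k*(a1*b1*d1)"
        "u1*v1*w2 + u1*v2*w1 + u2*v1*w1 = k*(a1*b1*d2 + a1*b2*d1 + a2*b1*d1)"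
        "u1*v2*w2 + u2*v1*w2 + u2*v2*w1 = k*(a1*b2*d2 + a2*b1*d2 + a2*b2*d1)"
        "u2*v2*w2 = k*(a2*b2*d2)"
        unfolding cub_def by simp_all
      from U3[OF na nb nd nu nv k(1) e]
      show "\<exists>\<sigma>. bij_betw \<sigma> {0::nat, 1, 2} {0, 1, 2} \<and> (\<forall>i<3. proportional (q (\<sigma> i)) (q' i))"
      proof (elim disjE conjE)
        assume pp: "prp a1 a2 u1 u2" "prp b1 b2 v1 v2" "prp d1 d2 w1 w2"
        show ?thesis
        proof (rule exI[of _ "\<lambda>i. if i = 0 then 0 else if i = 1 then 1 else (2::nat)"], rule conjI)
          show "bij_betw (\<lambda>i. if i = 0 then 0 else if i = 1 then 1 else (2::nat)) {0::nat, 1, 2} {0, 1, 2}"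
            by (rule mkbij) simp_all
          show "\<forall>i<3. proportional (q (if i = 0 then 0 else if i = 1 then 1 else (2::nat))) (q' i)"
          proof (intro allI impI)
            fix i :: nat assume "i < 3"
            then have "i = 0 \<or> i = 1 \<or> i = 2" by arith
            then show "proportional (q (if i = 0 then 0 else if i = 1 then 1 else (2::nat))) (q' i)"
              by (elim disjE) (simp_all add: qs qs[unfolded One_nat_def] prop_Qp pp)
          qed
        qed
      next
        assume pp: "prp a1 a2 u1 u2" "prp d1 d2 v1 v2" "prp b1 b2 w1 w2"
        show ?thesis
        proof (rule exI[of _ "\<lambda>i. if i = 0 then 0 else if i = 1 then 2 else (1::nat)"], rule conjI)
          show "bij_betw (\<lambda>i. if i = 0 then 0 else if i = 1 then 2 else (1::nat)) {0::nat, 1, 2} {0, 1, 2}"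
            by (rule mkbij) simp_all
          show "\<forall>i<3. proportional (q (if i = 0 then 0 else if i = 1 then 2 else (1::nat))) (q' i)"
          proof (intro allI impI)
            fix i :: nat assume "i < 3"
            then have "i = 0 \<or> i = 1 \<or> i = 2" by arith
            then show "proportional (q (if i = 0 then 0 else if i = 1 then 2 else (1::nat))) (q' i)"
              by (elim disjE) (simp_all add: qs qs[unfolded One_nat_def] prop_Qp pp)
          qed
        qed
      next
        assume pp: "prp b1 b2 u1 u2" "prp a1 a2 v1 v2" "prp d1 d2 w1 w2"
        show ?thesis
        proof (rule exI[of _ "\<lambda>i. if i = 0 then 1 else if i = 1 then 0 else (2::nat)"], rule conjI)
          show "bij_betw (\<lambda>i. if i = 0 then 1 else if i = 1 then 0 else (2::nat)) {0::nat, 1, 2} {0, 1, 2}"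
            by (rule mkbij) simp_all
          show "\<forall>i<3. proportional (q (if i = 0 then 1 else if i = 1 then 0 else (2::nat))) (q' i)"
          proof (intro allI impI)
            fix i :: nat assume "i < 3"
            then have "i = 0 \<or> i = 1 \<or> i = 2" by arith
            then show "proportional (q (if i = 0 then 1 else if i = 1 then 0 else (2::nat))) (q' i)"
              by (elim disjE) (simp_all add: qs qs[unfolded One_nat_def] prop_Qp pp)
          qed
        qed
      next
        assume pp: "prp b1 b2 u1 u2" "prp d1 d2 v1 v2" "prp a1 a2 w1 w2"
        show ?thesis
        proof (rule exI[of _ "\<lambda>i. if i = 0 then 1 else if i = 1 then 2 else (0::nat)"], rule conjI)
          show "bij_betw (\<lambda>i. if i = 0 then 1 else if i = 1 then 2 else (0::nat)) {0::nat, 1, 2} {0, 1, 2}"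
            by (rule mkbij) simp_all
          show "\<forall>i<3. proportional (q (if i = 0 then 1 else if i = 1 then 2 else (0::nat))) (q' i)"
          proof (intro allI impI)
            fix i :: nat assume "i < 3"
            then have "i = 0 \<or> i = 1 \<or> i = 2" by arith
            then show "proportional (q (if i = 0 then 1 else if i = 1 then 2 else (0::nat))) (q' i)"
              by (elim disjE) (simp_all add: qs qs[unfolded One_nat_def] prop_Qp pp)
          qed
        qed
      next
        assume pp: "prp d1 d2 u1 u2" "prp a1 a2 v1 v2" "prp b1 b2 w1 w2"
        show ?thesis
        proof (rule exI[of _ "\<lambda>i. if i = 0 then 2 else if i = 1 then 0 else (1::nat)"], rule conjI)
          show "bij_betw (\<lambda>i. if i = 0 then 2 else if i = 1 then 0 else (1::nat)) {0::nat, 1, 2} {0, 1, 2}"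
            by (rule mkbij) simp_all
          show "\<forall>i<3. proportional (q (if i = 0 then 2 else if i = 1 then 0 else (1::nat))) (q' i)"
          proof (intro allI impI)
            fix i :: nat assume "i < 3"
            then have "i = 0 \<or> i = 1 \<or> i = 2" by arith
            then show "proportional (q (if i = 0 then 2 else if i = 1 then 0 else (1::nat))) (q' i)"
              by (elim disjE) (simp_all add: qs qs[unfolded One_nat_def] prop_Qp pp)
          qed
        qed
      next
        assume pp: "prp d1 d2 u1 u2" "prp b1 b2 v1 v2" "prp a1 a2 w1 w2"
        show ?thesis
        proof (rule exI[of _ "\<lambda>i. if i = 0 then 2 else if i = 1 then 1 else (0::nat)"], rule conjI)
          show "bij_betw (\<lambda>i. if i = 0 then 2 else if i = 1 then 1 else (0::nat)) {0::nat, 1, 2} {0, 1, 2}"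
            by (rule mkbij) simp_all
          show "\<forall>i<3. proportional (q (if i = 0 then 2 else if i = 1 then 1 else (0::nat))) (q' i)"
          proof (intro allI impI)
            fix i :: nat assume "i < 3"
            then have "i = 0 \<or> i = 1 \<or> i = 2" by arith
            then show "proportional (q (if i = 0 then 2 else if i = 1 then 1 else (0::nat))) (q' i)"
              by (elim disjE) (simp_all add: qs qs[unfolded One_nat_def] prop_Qp pp)
          qed
        qed
      qed
    next
      assume "\<exists>\<sigma>. bij_betw \<sigma> {0::nat, 1, 2} {0, 1, 2} \<and> (\<forall>i<3. proportional (q (\<sigma> i)) (q' i))"
      then obtain \<sigma> where s: "bij_betw \<sigma> {0::nat, 1, 2} {0, 1, 2}"
        "\<And>i. i < 3 \<Longrightarrow> proportional (q (\<sigma> i)) (q' i)" by blast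
      have s0: "proportional (q (\<sigma> 0)) (q' 0)" "proportional (q (\<sigma> 1)) (q' 1)" "proportional (q (\<sigma> 2)) (q' 2)"
        using s(2) by simp_all
      show "proportional (prod3 (q 0) (q 1) (q 2)) (prod3 (q' 0) (q' 1) (q' 2))"
        using perm3[OF s(1)]
      proof (elim disjE conjE)
        assume "\<sigma> 0 = 0" "\<sigma> 1 = 1" "\<sigma> 2 = 2"
        then have "prp a1 a2 u1 u2" "prp b1 b2 v1 v2" "prp d1 d2 w1 w2" using s0 by (simp_all add: qs qs[unfolded One_nat_def] prop_Qp)
        from prop_cub[OF this] show ?thesis
          unfolding pq by (metis cub_sym1 cub_sym2)
      next
        assume "\<sigma> 0 = 0" "\<sigma> 1 = 2" "\<sigma> 2 = 1"
        then have "prp a1 a2 u1 u2" "prp d1 d2 v1 v2" "prp b1 b2 w1 w2" using s0 by (simp_all add: qs qs[unfolded One_nat_def] prop_Qp)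
        from prop_cub[OF this] show ?thesis
          unfolding pq by (metis cub_sym1 cub_sym2)
      next
        assume "\<sigma> 0 = 1" "\<sigma> 1 = 0" "\<sigma> 2 = 2"
        then have "prp b1 b2 u1 u2" "prp a1 a2 v1 v2" "prp d1 d2 w1 w2" using s0 by (simp_all add: qs qs[unfolded One_nat_def] prop_Qp)
        from prop_cub[OF this] show ?thesis
          unfolding pq by (metis cub_sym1 cub_sym2)
      next
        assume "\<sigma> 0 = 1" "\<sigma> 1 = 2" "\<sigma> 2 = 0"
        then have "prp b1 b2 u1 u2" "prp d1 d2 v1 v2" "prp a1 a2 w1 w2" using s0 by (simp_all add: qs qs[unfolded One_nat_def] prop_Qp)
        from prop_cub[OF this] show ?thesis
          unfolding pq by (metis cub_sym1 cub_sym2)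
      next
        assume "\<sigma> 0 = 2" "\<sigma> 1 = 0" "\<sigma> 2 = 1"
        then have "prp d1 d2 u1 u2" "prp a1 a2 v1 v2" "prp b1 b2 w1 w2" using s0 by (simp_all add: qs qs[unfolded One_nat_def] prop_Qp)
        from prop_cub[OF this] show ?thesis
          unfolding pq by (metis cub_sym1 cub_sym2)
      next
        assume "\<sigma> 0 = 2" "\<sigma> 1 = 1" "\<sigma> 2 = 0"
        then have "prp d1 d2 u1 u2" "prp b1 b2 v1 v2" "prp a1 a2 w1 w2" using s0 by (simp_all add: qs qs[unfolded One_nat_def] prop_Qp)
        from prop_cub[OF this] show ?thesis
          unfolding pq by (metis cub_sym1 cub_sym2)
      qed
    qed
  qed
  show ?thesis using P1 P2 P3 P4 P5 by blast
qed

end
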